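(* Let $\beta_1,\beta_2,\gamma,\rho_1,\rho_2>0$, let $\sigma_1,\sigma_2>0$ with $\sigma_1+\sigma_2=1$, let $q\in[0,1]$ and $T>0$. Let $s_0,e_0,i_0,j_0>0$ and $r_0\ge 0$ satisfy $s_0+e_0+i_0+j_0+r_0=1$. Consider the system \[ \begin{aligned} s'&=-s\,(\beta_1 i+\beta_2 j),\\ e'&=s\,(\beta_1 i+\beta_2 j)-\gamma e,\\ i'&=\sigma_1\gamma e-\rho_1 i,\\ j'&=\sigma_2\gamma e-\rho_2 j,\\ r'&=\rho_1 i+(1-q)\rho_2 j,\\ n'&=-q\rho_2 j, \end{aligned} \] on $[0,T]$ with initial conditions $s(0)=s_0$, $e(0)=e_0$, $i(0)=i_0$, $j(0)=j_0$, $r(0)=r_0$, $n(0)=1$. Let $s(t),e(t),i(t),j(t),r(t),n(t)$ be solutions of this system with these initial conditions. Then these solutions are defined on the entire interval $[0,T]$, and for all $t\in(0,T]$ they are positive and bounded. *)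

theory Defs
  imports "HOL-Analysis.Analysis"
begin

definition seijrn_solution ::
  "real \<Rightarrow> real \<Rightarrow> real \<Rightarrow> real \<Rightarrow> real \<Rightarrow> real \<Rightarrow> real \<Rightarrow> real \<Rightarrow> real \<Rightarrow> real \<Rightarrow>
   real \<Rightarrow> real \<Rightarrow> real \<Rightarrow> real \<Rightarrow>
   (real \<Rightarrow> real) \<Rightarrow> (real \<Rightarrow> real) \<Rightarrow> (real \<Rightarrow> real) \<Rightarrow> (real \<Rightarrow> real) \<Rightarrow>
   (real \<Rightarrow> real) \<Rightarrow> (real \<Rightarrow> real) \<Rightarrow> bool" where
  "seijrn_solution \<beta>1 \<beta>2 \<gamma> \<rho>1 \<rho>2 \<sigma>1 \<sigma>2 q T s0 e0 i0 j0 r0 s e i j r n \<longleftrightarrow>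
     s 0 = s0 \<and> e 0 = e0 \<and> i 0 = i0 \<and> j 0 = j0 \<and> r 0 = r0 \<and> n 0 = 1 \<and>
     (\<forall>t\<in>{0..T}.
        (s has_real_derivative (- s t * (\<beta>1 * i t + \<beta>2 * j t))) (at t within {0..T}) \<and>
        (e has_real_derivative (s t * (\<beta>1 * i t + \<beta>2 * j t) - \<gamma> * e t)) (at t within {0..T}) \<and>
        (i has_real_derivative (\<sigma>1 * \<gamma> * e t - \<rho>1 * i t)) (at t within {0..T}) \<and>
        (j has_real_derivative (\<sigma>2 * \<gamma> * e t - \<rho>2 * j t)) (at t within {0..T}) \<and>
        (r has_real_derivative (\<rho>1 * i t + (1 - q) * \<rho>2 * j t)) (at t within {0..T}) \<and>
        (n has_real_derivative (- q * \<rho>2 * j t)) (at t within {0..T}))"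

end

theory Submission
  imports Defs
begin

lemma vd: assumes "(x has_vector_derivative v) (at t within S)"
  shows "((\<lambda>t. x t $ k) has_real_derivative v $ k) (at t within S)"
proof -
  have "((\<lambda>t. x t $ k) has_derivative (\<lambda>h. (h *\<^sub>R v) $ k)) (at t within S)"
    using bounded_linear.has_derivative[OF bounded_linear_vec_nth assms[unfolded has_vector_derivative_def]] .
  moreover have "(\<lambda>h. (h *\<^sub>R v) $ k) = (*) (v $ k)" by (auto simp: fun_eq_iff)
  ultimately show ?thesis by (simp add: has_field_derivative_def)
qed

lemma lipschitz_cont:
  fixes F :: "'a::real_normed_vector \<Rightarrow> 'b::real_normed_vector"
  assumes L: "\<And>x y. norm (F x - F y) \<le> L * norm (x - y)" and L0: "0 \<le> L"
  shows "continuous_on UNIV F"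
  unfolding continuous_on_iff
proof (intro ballI allI impI)
  fix x :: 'a and e :: real assume e: "0 < e"
  show "\<exists>d>0. \<forall>x'\<in>UNIV. dist x' x < d \<longrightarrow> dist (F x') (F x) < e"
  proof (intro exI[of _ "e / (L + 1)"] conjI ballI impI)
    show "0 < e / (L + 1)" using e L0 by simp
    fix x' assume "dist x' x < e / (L + 1)"
    then have "(L+1) * norm (x' - x) < e" using L0 by (simp add: dist_norm field_simps)
    moreover have "norm (F x' - F x) \<le> (L+1) * norm (x' - x)"
      using L[of x' x] by (smt (verit) mult_right_mono norm_ge_zero distrib_left mult_1_right)
    ultimately show "dist (F x') (F x) < e" by (simp add: dist_norm)
  qed
qed

lemma picard:
  fixes F :: "'a::banach \<Rightarrow> 'a" and T L :: real
  assumes L: "\<And>x y. norm (F x - F y) \<le> L * norm (x - y)" and L0: "0 \<le> L" and T: "0 < T"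
  shows "\<exists>x. x 0 = x0 \<and> continuous_on {0..T} x \<and>
           (\<forall>t\<in>{0..T}. (x has_vector_derivative F (x t)) (at t within {0..T}))"
proof -
  define p where "p t = max 0 (min T t)" for t
  have p_in: "p t \<in> {0..T}" for t using T by (auto simp: p_def)
  have p_id: "t \<in> {0..T} \<Longrightarrow> p t = t" for t by (auto simp: p_def)
  have p_cont: "continuous_on UNIV p" unfolding p_def by (intro continuous_intros)
  have contF: "continuous_on UNIV F" by (rule lipschitz_cont[OF L L0])
  define G where "G \<phi> = (\<lambda>t. x0 + integral {0..p t} (\<lambda>u. F (\<phi> u)))" for \<phi> :: "real \<Rightarrow> 'a"
  have Fphi_cont: "continuous_on {0..T} (\<lambda>u. F (\<phi> u))" if "continuous_on {0..T} \<phi>" for \<phi> :: "real \<Rightarrow> 'a"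
    using continuous_on_compose2[OF contF that] by simp
  have G_bc: "G \<phi> \<in> bcontfun" if c: "continuous_on {0..T} \<phi>" for \<phi>
  proof -
    define I where "I s = x0 + integral {0..s} (\<lambda>u. F (\<phi> u))" for s
    have Ic: "continuous_on {0..T} I" unfolding I_def
      by (intro continuous_intros indefinite_integral_continuous_1 integrable_continuous_interval Fphi_cont c)
    have Geq: "G \<phi> = I \<circ> p" by (auto simp: G_def I_def fun_eq_iff)
    have "continuous_on UNIV (I \<circ> p)"
      by (rule continuous_on_compose[OF p_cont]) (rule continuous_on_subset[OF Ic], auto intro: p_in)
    moreover have "bounded (range (I \<circ> p))"
    proof -
      have "bounded (I ` {0..T})" by (intro compact_imp_bounded compact_continuous_image Ic) auto
      moreover have "range (I \<circ> p) \<subseteq> I ` {0..T}" using p_in by auto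
      ultimately show ?thesis using bounded_subset by blast
    qed
    ultimately show ?thesis unfolding bcontfun_def Geq by simp
  qed
  define P where "P \<phi> = Bcontfun (G (apply_bcontfun \<phi>))" for \<phi> :: "real \<Rightarrow>\<^sub>C 'a"
  have P_app: "apply_bcontfun (P \<phi>) = G (apply_bcontfun \<phi>)" for \<phi>
    unfolding P_def by (rule Bcontfun_inverse[OF G_bc]) (rule continuous_on_apply_bcontfun)
  have est: "norm ((P ^^ k) \<phi> t - (P ^^ k) \<psi> t) \<le> (L * p t) ^ k / fact k * dist \<phi> \<psi>" for k \<phi> \<psi> t
  proof (induction k arbitrary: t)
    case 0
    then show ?case using dist_bounded[of \<phi> t \<psi>] by (simp add: dist_norm)
  next
    case (Suc k)
    define a where "a = (P ^^ k) \<phi>"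
    define b where "b = (P ^^ k) \<psi>"
    define d where "d = dist \<phi> \<psi>"
    have d0: "0 \<le> d" by (simp add: d_def)
    have IH: "norm (a u - b u) \<le> (L * p u) ^ k / fact k * d" for u
      using Suc.IH unfolding a_def b_def d_def .
    have ia: "(\<lambda>u. F (a u)) integrable_on {0..p t}"
      by (intro integrable_continuous_interval continuous_on_compose2[OF contF]) auto
    have ib: "(\<lambda>u. F (b u)) integrable_on {0..p t}"
      by (intro integrable_continuous_interval continuous_on_compose2[OF contF]) auto
    define A where "A u = (L * u) ^ Suc k / fact (Suc k) * d" for u
    have Ader: "(A has_vector_derivative L * ((L * u) ^ k / fact k * d)) (at u within {0..p t})" for u
    proof -
      have Aeq: "A = (\<lambda>u. (L ^ Suc k / fact (Suc k) * d) * u ^ Suc k)"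
        by (auto simp: A_def fun_eq_iff power_mult_distrib)
      have D: "((\<lambda>u. (L ^ Suc k / fact (Suc k) * d) * u ^ Suc k) has_real_derivative
             (L ^ Suc k / fact (Suc k) * d) * (real (Suc k) * u ^ k)) (at u within {0..p t})"
        using DERIV_cmult[OF DERIV_pow[of "Suc k" u "{0..p t}"], of "L ^ Suc k / fact (Suc k) * d"] by simp
      have E: "(L ^ Suc k / fact (Suc k) * d) * (real (Suc k) * u ^ k) = L * ((L * u) ^ k / fact k * d)"
      proof -
        have g: "\<And>a f M Y::real. a \<noteq> 0 \<Longrightarrow> f \<noteq> 0 \<Longrightarrow> (L * M / (a * f) * d) * (a * Y) = L * ((M * Y) / f * d)"
          by (simp add: field_simps)
        have f: "fact (Suc k) = real (Suc k) * (fact k :: real)" by simp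
        show ?thesis unfolding f power_mult_distrib power_Suc
          by (rule g) auto
      qed
      from D have "(A has_real_derivative L * ((L * u) ^ k / fact k * d)) (at u within {0..p t})"
        unfolding Aeq E .
      then show ?thesis by (simp only: has_real_derivative_iff_has_vector_derivative)
    qed
    have hi: "((\<lambda>u. L * ((L * u) ^ k / fact k * d)) has_integral (A (p t) - A 0)) {0..p t}"
      by (rule fundamental_theorem_of_calculus) (use p_in[of t] Ader in auto)
    have "norm ((P ^^ Suc k) \<phi> t - (P ^^ Suc k) \<psi> t) = norm (G a t - G b t)"
      by (simp add: a_def b_def P_app)
    also have "\<dots> = norm (integral {0..p t} (\<lambda>u. F (a u) - F (b u)))"
      by (simp add: G_def integral_diff[OF ia ib])
    also have "\<dots> \<le> integral {0..p t} (\<lambda>u. L * ((L * u) ^ k / fact k * d))"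
    proof (rule integral_norm_bound_integral)
      show "(\<lambda>u. F (a u) - F (b u)) integrable_on {0..p t}" using ia ib by (rule integrable_diff)
      show "(\<lambda>u. L * ((L * u) ^ k / fact k * d)) integrable_on {0..p t}" using hi by blast
      fix u assume u: "u \<in> {0..p t}"
      then have "p u = u" using p_in[of t] by (intro p_id) auto
      then have "norm (a u - b u) \<le> (L * u) ^ k / fact k * d" using IH[of u] by simp
      then have "L * norm (a u - b u) \<le> L * ((L * u) ^ k / fact k * d)" using L0 by (rule mult_left_mono)
      then show "norm (F (a u) - F (b u)) \<le> L * ((L * u) ^ k / fact k * d)" using L[of "a u" "b u"] by linarith
    qed
    also have "\<dots> = A (p t) - A 0" using hi by (rule integral_unique)
    also have "\<dots> = (L * p t) ^ Suc k / fact (Suc k) * dist \<phi> \<psi>" by (simp add: A_def d_def)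
    finally show ?case .
  qed
  have estd: "dist ((P ^^ k) \<phi>) ((P ^^ k) \<psi>) \<le> (L * T) ^ k / fact k * dist \<phi> \<psi>" for k \<phi> \<psi>
  proof (rule dist_bound)
    fix t
    have "(L * p t) ^ k \<le> (L * T) ^ k"
      using p_in[of t] L0 by (intro power_mono mult_left_mono) auto
    then have "(L * p t) ^ k / fact k * dist \<phi> \<psi> \<le> (L * T) ^ k / fact k * dist \<phi> \<psi>"
      by (intro mult_right_mono divide_right_mono) auto
    then show "dist (((P ^^ k) \<phi>) t) (((P ^^ k) \<psi>) t) \<le> (L * T) ^ k / fact k * dist \<phi> \<psi>"
      using est[of k \<phi> t \<psi>] by (simp add: dist_norm)
  qed
  have "(\<lambda>k. inverse (fact k) * (L * T) ^ k) \<longlonglongrightarrow> 0"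
    by (rule summable_LIMSEQ_zero[OF summable_exp])
  from LIMSEQ_D[OF this, of "1/2"] obtain k where
    k0: "\<forall>n\<ge>k. norm (inverse (fact n) * (L * T) ^ n - 0) < 1/2" by auto
  define c where "c = (L * T) ^ k / fact k"
  have ceq: "c = inverse (fact k) * (L * T) ^ k" by (simp add: c_def divide_inverse mult.commute)
  have "norm (inverse (fact k) * (L * T) ^ k - 0) < 1/2" using k0 by simp
  then have "\<bar>c\<bar> < 1/2" unfolding ceq by simp
  moreover have "0 \<le> c" unfolding c_def using L0 T by simp
  ultimately have c: "0 \<le> c" "c < 1" by auto
  have "\<exists>!z. (P ^^ k) z = z"
    by (rule banach_fix_type[OF c]) (use estd in \<open>simp add: c_def\<close>)
  then obtain y where y: "(P ^^ k) y = y" "\<And>z. (P ^^ k) z = z \<Longrightarrow> z = y" by blast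
  have "(P ^^ k) (P y) = P y" by (metis funpow_swap1 y(1))
  then have Py: "P y = y" using y(2) by blast
  define x where "x = apply_bcontfun y"
  have xeq: "x t = x0 + integral {0..t} (\<lambda>u. F (x u))" if "t \<in> {0..T}" for t
  proof -
    have "x t = apply_bcontfun (P y) t" by (simp add: Py x_def)
    also have "\<dots> = x0 + integral {0..t} (\<lambda>u. F (x u))" by (simp add: P_app G_def p_id[OF that] x_def)
    finally show ?thesis .
  qed
  have xc: "continuous_on {0..T} x" unfolding x_def by simp
  show ?thesis
  proof (intro exI[of _ x] conjI ballI xc)
    show "x 0 = x0" using xeq[of 0] T by simp
    fix t assume t: "t \<in> {0..T}"
    have "((\<lambda>t. x0 + integral {0..t} (\<lambda>u. F (x u))) has_vector_derivative F (x t)) (at t within {0..T})"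
      using has_vector_derivative_add[OF has_vector_derivative_const[of x0] integral_has_vector_derivative[OF Fphi_cont[OF xc] t]] by simp
    then show "(x has_vector_derivative F (x t)) (at t within {0..T})"
      using has_vector_derivative_transform[OF t, of x "\<lambda>t. x0 + integral {0..t} (\<lambda>u. F (x u))"] xeq by blast
  qed
qed

lemma one_pos:
  fixes x x' :: "real \<Rightarrow> real"
  assumes a: "0 < a" and c: "continuous_on {0..a} x"
    and d: "\<And>t. 0 < t \<Longrightarrow> t < a \<Longrightarrow> (x has_real_derivative x' t) (at t)"
    and ineq: "\<And>t. 0 < t \<Longrightarrow> t < a \<Longrightarrow> x' t \<ge> - M * x t"
    and x0: "0 < x 0"
  shows "0 < x a"
proof -
  define h where "h t = x t * exp (M * t)" for t
  have hc: "continuous_on {0..a} h" unfolding h_def by (intro continuous_intros c)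
  have hd: "(h has_real_derivative (x' t * exp (M * t) + x t * (exp (M * t) * M))) (at t)"
    if "0 < t" "t < a" for t
    unfolding h_def by (rule derivative_eq_intros d[OF that] refl)+ simp
  obtain l z where z: "0 < z" "z < a" "DERIV h z :> l" "h a - h 0 = (a - 0) * l"
    using MVT[OF a hc] hd by (meson real_differentiable_def)
  have "l = x' z * exp (M * z) + x z * (exp (M * z) * M)"
    using DERIV_unique[OF z(3) hd[OF z(1,2)]] .
  also have "\<dots> = exp (M * z) * (x' z + M * x z)" by (simp add: algebra_simps)
  finally have "l \<ge> 0" using ineq[OF z(1,2)] by simp
  then have "a * l \<ge> 0" using a by simp
  then have "h a \<ge> h 0" using z(4) by simp
  moreover have "h 0 > 0" using x0 by (simp add: h_def)
  ultimately have "h a > 0" by simp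
  then show ?thesis by (simp add: h_def zero_less_mult_iff)
qed

lemma joint_pos:
  fixes x x' :: "nat \<Rightarrow> real \<Rightarrow> real" and N :: nat and T M :: real
  assumes T: "0 < T"
    and cont: "\<And>k. k < N \<Longrightarrow> continuous_on {0..T} (x k)"
    and der: "\<And>k t. k < N \<Longrightarrow> 0 < t \<Longrightarrow> t < T \<Longrightarrow> (x k has_real_derivative x' k t) (at t)"
    and init: "\<And>k. k < N \<Longrightarrow> 0 < x k 0"
    and ineq: "\<And>t k. 0 < t \<Longrightarrow> t < T \<Longrightarrow> (\<forall>m<N. 0 < x m t) \<Longrightarrow> k < N \<Longrightarrow> x' k t \<ge> - M * x k t"
  shows "\<forall>t\<in>{0..T}. \<forall>k<N. 0 < x k t"
proof (rule ccontr)
  define Z where "Z = (\<Union>k\<in>{..<N}. {0..T} \<inter> x k -` {..0})"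
  assume "\<not> (\<forall>t\<in>{0..T}. \<forall>k<N. 0 < x k t)"
  then have Zne: "Z \<noteq> {}" by (force simp: Z_def)
  have Zcl: "closed Z" unfolding Z_def
    by (intro closed_UN finite_lessThan ballI continuous_closed_preimage cont) auto
  have Zbdd: "bdd_below Z" unfolding Z_def by (auto intro!: bdd_belowI[of _ 0])
  define ts where "ts = Inf Z"
  have tsZ: "ts \<in> Z" unfolding ts_def by (rule closed_contains_Inf[OF Zne Zbdd Zcl])
  then obtain k where k: "k < N" "ts \<in> {0..T}" "x k ts \<le> 0" by (auto simp: Z_def)
  have ts0: "0 < ts"
  proof -
    have "ts \<noteq> 0" using k init[OF k(1)] by auto
    then show ?thesis using k by auto
  qed
  have below: "\<forall>m<N. 0 < x m t" if "0 \<le> t" "t < ts" for t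
  proof (rule ccontr)
    assume "\<not> (\<forall>m<N. 0 < x m t)"
    then have "t \<in> Z" using that k by (force simp: Z_def)
    then have "ts \<le> t" unfolding ts_def by (rule cInf_lower[OF _ Zbdd])
    then show False using that by simp
  qed
  have "0 < x k ts"
  proof (rule one_pos[OF ts0, where x' = "x' k" and M = M])
    show "continuous_on {0..ts} (x k)" using cont[OF k(1)] by (rule continuous_on_subset) (use k in auto)
    show "(x k has_real_derivative x' k t) (at t)" if "0 < t" "t < ts" for t
      using der[OF k(1) that(1)] that k by auto
    show "x' k t \<ge> - M * x k t" if "0 < t" "t < ts" for t
      using ineq[OF that(1) _ below[of t] k(1)] that k by auto
    show "0 < x k 0" using init k by auto
  qed
  then show False using k by simp
qed

lemma all4: "(\<forall>m<(4::nat). P m) \<longleftrightarrow> P 0 \<and> P 1 \<and> P 2 \<and> P 3"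
  by (auto simp: less_Suc_eq numeral_eq_Suc)

lemma pos4:
  fixes s e i j s' e' i' j' :: "real \<Rightarrow> real" and T M :: real
  assumes T: "0 < T"
    and c: "continuous_on {0..T} s" "continuous_on {0..T} e" "continuous_on {0..T} i" "continuous_on {0..T} j"
    and d: "\<And>t. 0 < t \<Longrightarrow> t < T \<Longrightarrow> (s has_real_derivative s' t) (at t) \<and> (e has_real_derivative e' t) (at t)
               \<and> (i has_real_derivative i' t) (at t) \<and> (j has_real_derivative j' t) (at t)"
    and p0: "0 < s 0" "0 < e 0" "0 < i 0" "0 < j 0"
    and ineq: "\<And>t. 0 < t \<Longrightarrow> t < T \<Longrightarrow> 0 < s t \<Longrightarrow> 0 < e t \<Longrightarrow> 0 < i t \<Longrightarrow> 0 < j t \<Longrightarrow>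
               s' t \<ge> - M * s t \<and> e' t \<ge> - M * e t \<and> i' t \<ge> - M * i t \<and> j' t \<ge> - M * j t"
  shows "\<forall>t\<in>{0..T}. 0 < s t \<and> 0 < e t \<and> 0 < i t \<and> 0 < j t"
proof -
  define X where "X k = (if k = 0 then s else if k = 1 then e else if k = 2 then i else j)" for k :: nat
  define X' where "X' k = (if k = 0 then s' else if k = 1 then e' else if k = 2 then i' else j')" for k :: nat
  have "\<forall>t\<in>{0..T}. \<forall>k<4. 0 < X k t"
  proof (rule joint_pos[OF T, where x' = X' and M = M])
    show "continuous_on {0..T} (X k)" if "k < 4" for k
      using that c by (auto simp: X_def less_Suc_eq numeral_eq_Suc)
    show "(X k has_real_derivative X' k t) (at t)" if "k < 4" "0 < t" "t < T" for k t
      using that d[of t] by (auto simp: X_def X'_def less_Suc_eq numeral_eq_Suc)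
    show "0 < X k 0" if "k < 4" for k
      using that p0 by (auto simp: X_def less_Suc_eq numeral_eq_Suc)
    show "X' k t \<ge> - M * X k t" if "0 < t" "t < T" "\<forall>m<4. 0 < X m t" "k < 4" for t k
      using that ineq[of t] unfolding all4 by (auto simp: X_def X'_def less_Suc_eq numeral_eq_Suc)
  qed
  then show ?thesis unfolding all4 by (simp add: X_def)
qed

lemma cont_bound:
  fixes f :: "real \<Rightarrow> real"
  assumes "continuous_on {0..T} f"
  obtains B where "\<forall>t\<in>{0..T}. \<bar>f t\<bar> \<le> B"
proof -
  have "bounded (f ` {0..T})" by (intro compact_imp_bounded compact_continuous_image assms) auto
  then obtain B where "\<forall>y\<in>f ` {0..T}. norm y \<le> B" by (auto simp: bounded_iff)
  then show ?thesis using that by auto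
qed

lemma sol_props:
  fixes \<beta>1 \<beta>2 \<gamma> \<rho>1 \<rho>2 \<sigma>1 \<sigma>2 q T s0 e0 i0 j0 r0 :: real
  assumes "\<beta>1 > 0" "\<beta>2 > 0" "\<gamma> > 0" "\<rho>1 > 0" "\<rho>2 > 0"
    and "\<sigma>1 > 0" "\<sigma>2 > 0" "\<sigma>1 + \<sigma>2 = 1"
    and "0 \<le> q" "q \<le> 1" "T > 0"
    and "s0 > 0" "e0 > 0" "i0 > 0" "j0 > 0" "r0 \<ge> 0"
    and "s0 + e0 + i0 + j0 + r0 = 1"
    and sol: "seijrn_solution \<beta>1 \<beta>2 \<gamma> \<rho>1 \<rho>2 \<sigma>1 \<sigma>2 q T s0 e0 i0 j0 r0 s e i j r n"
  shows "(\<forall>t\<in>{0<..T}. s t > 0 \<and> e t > 0 \<and> i t > 0 \<and> j t > 0 \<and> r t > 0 \<and> n t > 0) \<and>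
          (\<exists>B. \<forall>t\<in>{0<..T}. \<bar>s t\<bar> \<le> B \<and> \<bar>e t\<bar> \<le> B \<and> \<bar>i t\<bar> \<le> B \<and>
                              \<bar>j t\<bar> \<le> B \<and> \<bar>r t\<bar> \<le> B \<and> \<bar>n t\<bar> \<le> B)"
proof -
  note A = assms
  have init: "s 0 = s0" "e 0 = e0" "i 0 = i0" "j 0 = j0" "r 0 = r0" "n 0 = 1"
    using sol by (auto simp: seijrn_solution_def)
  have D: "\<And>t. t \<in> {0..T} \<Longrightarrow>
        (s has_real_derivative (- s t * (\<beta>1 * i t + \<beta>2 * j t))) (at t within {0..T}) \<and>
        (e has_real_derivative (s t * (\<beta>1 * i t + \<beta>2 * j t) - \<gamma> * e t)) (at t within {0..T}) \<and>
        (i has_real_derivative (\<sigma>1 * \<gamma> * e t - \<rho>1 * i t)) (at t within {0..T}) \<and>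
        (j has_real_derivative (\<sigma>2 * \<gamma> * e t - \<rho>2 * j t)) (at t within {0..T}) \<and>
        (r has_real_derivative (\<rho>1 * i t + (1 - q) * \<rho>2 * j t)) (at t within {0..T}) \<and>
        (n has_real_derivative (- q * \<rho>2 * j t)) (at t within {0..T})"
    using sol by (auto simp: seijrn_solution_def)
  have cs: "continuous_on {0..T} s" by (rule DERIV_continuous_on) (use D in blast)
  have ce: "continuous_on {0..T} e" by (rule DERIV_continuous_on) (use D in blast)
  have ci: "continuous_on {0..T} i" by (rule DERIV_continuous_on) (use D in blast)
  have cj: "continuous_on {0..T} j" by (rule DERIV_continuous_on) (use D in blast)
  have cr: "continuous_on {0..T} r" by (rule DERIV_continuous_on) (use D in blast)
  have cn: "continuous_on {0..T} n" by (rule DERIV_continuous_on) (use D in blast)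
  have cg: "continuous_on {0..T} (\<lambda>t. \<beta>1 * i t + \<beta>2 * j t)" by (intro continuous_intros ci cj)
  obtain Mg where Mg: "\<forall>t\<in>{0..T}. \<bar>\<beta>1 * i t + \<beta>2 * j t\<bar> \<le> Mg" using cont_bound[OF cg] by blast
  define M where "M = \<bar>Mg\<bar> + \<gamma> + \<rho>1 + \<rho>2"
  have Dat: "\<And>t. 0 < t \<Longrightarrow> t < T \<Longrightarrow>
        (s has_real_derivative (- s t * (\<beta>1 * i t + \<beta>2 * j t))) (at t) \<and>
        (e has_real_derivative (s t * (\<beta>1 * i t + \<beta>2 * j t) - \<gamma> * e t)) (at t) \<and>
        (i has_real_derivative (\<sigma>1 * \<gamma> * e t - \<rho>1 * i t)) (at t) \<and>
        (j has_real_derivative (\<sigma>2 * \<gamma> * e t - \<rho>2 * j t)) (at t) \<and>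
        (r has_real_derivative (\<rho>1 * i t + (1 - q) * \<rho>2 * j t)) (at t)"
  proof -
    fix t :: real assume t: "0 < t" "t < T"
    then have "at t within {0..T} = at t" by (intro at_within_Icc_at)
    then show "?thesis t" using D[of t] t by auto
  qed
  have pos: "\<forall>t\<in>{0..T}. 0 < s t \<and> 0 < e t \<and> 0 < i t \<and> 0 < j t"
  proof (rule pos4[OF A(11) cs ce ci cj, where M = M and s' = "\<lambda>t. - s t * (\<beta>1 * i t + \<beta>2 * j t)"
      and e' = "\<lambda>t. s t * (\<beta>1 * i t + \<beta>2 * j t) - \<gamma> * e t" and i' = "\<lambda>t. \<sigma>1 * \<gamma> * e t - \<rho>1 * i t"
      and j' = "\<lambda>t. \<sigma>2 * \<gamma> * e t - \<rho>2 * j t"])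
    show "\<And>t. 0 < t \<Longrightarrow> t < T \<Longrightarrow> (s has_real_derivative (- s t * (\<beta>1 * i t + \<beta>2 * j t))) (at t) \<and>
        (e has_real_derivative (s t * (\<beta>1 * i t + \<beta>2 * j t) - \<gamma> * e t)) (at t) \<and>
        (i has_real_derivative (\<sigma>1 * \<gamma> * e t - \<rho>1 * i t)) (at t) \<and>
        (j has_real_derivative (\<sigma>2 * \<gamma> * e t - \<rho>2 * j t)) (at t)" using Dat by simp
    show "0 < s 0" "0 < e 0" "0 < i 0" "0 < j 0" using init A by auto
    fix t assume t: "0 < t" "t < T" and p: "0 < s t" "0 < e t" "0 < i t" "0 < j t"
    have g0: "0 \<le> \<beta>1 * i t + \<beta>2 * j t" using p A by (simp add: add_nonneg_nonneg)
    have "\<bar>\<beta>1 * i t + \<beta>2 * j t\<bar> \<le> Mg" using Mg t by auto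
    then have gM: "\<beta>1 * i t + \<beta>2 * j t \<le> M" using A unfolding M_def by linarith
    have "s t * (\<beta>1 * i t + \<beta>2 * j t) \<le> s t * M" using gM p by (intro mult_left_mono) auto
    then have c1: "- s t * (\<beta>1 * i t + \<beta>2 * j t) \<ge> - M * s t" by (simp add: mult.commute)
    have "0 \<le> s t * (\<beta>1 * i t + \<beta>2 * j t)" using g0 p by simp
    moreover have "\<gamma> * e t \<le> M * e t" using p A by (auto intro!: mult_right_mono simp: M_def)
    ultimately have c2: "s t * (\<beta>1 * i t + \<beta>2 * j t) - \<gamma> * e t \<ge> - M * e t" by simp
    have "\<rho>1 * i t \<le> M * i t" using p A by (auto intro!: mult_right_mono simp: M_def)
    moreover have "0 \<le> \<sigma>1 * \<gamma> * e t" using p A by auto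
    ultimately have c3: "\<sigma>1 * \<gamma> * e t - \<rho>1 * i t \<ge> - M * i t" by simp
    have "\<rho>2 * j t \<le> M * j t" using p A by (auto intro!: mult_right_mono simp: M_def)
    moreover have "0 \<le> \<sigma>2 * \<gamma> * e t" using p A by auto
    ultimately have c4: "\<sigma>2 * \<gamma> * e t - \<rho>2 * j t \<ge> - M * j t" by simp
    show "- s t * (\<beta>1 * i t + \<beta>2 * j t) \<ge> - M * s t \<and>
        s t * (\<beta>1 * i t + \<beta>2 * j t) - \<gamma> * e t \<ge> - M * e t \<and>
        \<sigma>1 * \<gamma> * e t - \<rho>1 * i t \<ge> - M * i t \<and> \<sigma>2 * \<gamma> * e t - \<rho>2 * j t \<ge> - M * j t"
      using c1 c2 c3 c4 by blast
  qed
  have rpos: "0 < r t" if t: "t \<in> {0<..T}" for t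
  proof -
    have "\<exists>l z. 0 < z \<and> z < t \<and> DERIV r z :> l \<and> r t - r 0 = (t - 0) * l"
    proof (rule MVT)
      show "0 < t" using t by simp
      have "{0..t} \<subseteq> {0..T}" using t by auto
      then show "continuous_on {0..t} r" by (rule continuous_on_subset[OF cr])
      fix x assume x: "0 < x" "x < t"
      then have "x < T" using t by simp
      then have "(r has_real_derivative (\<rho>1 * i x + (1 - q) * \<rho>2 * j x)) (at x)" using Dat[OF x(1)] by blast
      then show "r differentiable (at x)" unfolding real_differentiable_def by blast
    qed
    then obtain l z where z: "0 < z" "z < t" "DERIV r z :> l" "r t - r 0 = (t - 0) * l" by blast
    have zT: "z < T" using z t by simp
    have "DERIV r z :> (\<rho>1 * i z + (1 - q) * \<rho>2 * j z)" using Dat[OF z(1) zT] by blast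
    then have l: "l = \<rho>1 * i z + (1 - q) * \<rho>2 * j z" using DERIV_unique[OF z(3)] by blast
    have "z \<in> {0..T}" using z zT by simp
    then have "0 < i z" "0 < j z" using pos by blast+
    then have "0 < \<rho>1 * i z" "0 \<le> (1 - q) * \<rho>2 * j z" using A(4,5,10) by simp_all
    then have "0 < l" unfolding l by linarith
    then have "0 < t * l" using t by simp
    then show ?thesis using z(4) init(5) A(16) by simp
  qed
  have nsum: "n t = s t + e t + i t + j t + r t" if t: "t \<in> {0..T}" for t
  proof -
    define Df where "Df t = n t - (s t + e t + i t + j t + r t)" for t
    have "\<exists>c. \<forall>x\<in>{0..T}. Df x = c"
    proof (rule has_field_derivative_zero_constant)
      show "convex {0..T::real}" by simp
      fix x assume x: "x \<in> {0..T}"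
      have "(Df has_real_derivative (- q * \<rho>2 * j x) - ((- s x * (\<beta>1 * i x + \<beta>2 * j x)) +
             (s x * (\<beta>1 * i x + \<beta>2 * j x) - \<gamma> * e x) + (\<sigma>1 * \<gamma> * e x - \<rho>1 * i x) +
             (\<sigma>2 * \<gamma> * e x - \<rho>2 * j x) + (\<rho>1 * i x + (1 - q) * \<rho>2 * j x))) (at x within {0..T})"
        unfolding Df_def using D[OF x] by (intro DERIV_diff DERIV_add) blast+
      moreover have "(- q * \<rho>2 * j x) - ((- s x * (\<beta>1 * i x + \<beta>2 * j x)) +
             (s x * (\<beta>1 * i x + \<beta>2 * j x) - \<gamma> * e x) + (\<sigma>1 * \<gamma> * e x - \<rho>1 * i x) +
             (\<sigma>2 * \<gamma> * e x - \<rho>2 * j x) + (\<rho>1 * i x + (1 - q) * \<rho>2 * j x)) = \<gamma> * e x * (1 - (\<sigma>1 + \<sigma>2))"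
        by (simp add: algebra_simps)
      ultimately show "(Df has_real_derivative 0) (at x within {0..T})" using A(8) by simp
    qed
    then obtain c where c: "\<forall>x\<in>{0..T}. Df x = c" by blast
    have "Df 0 = 0" using init A(17) by (simp add: Df_def)
    then have "Df t = 0" using c t A(11) by force
    then show ?thesis by (simp add: Df_def)
  qed
  have P: "\<forall>t\<in>{0<..T}. s t > 0 \<and> e t > 0 \<and> i t > 0 \<and> j t > 0 \<and> r t > 0 \<and> n t > 0"
  proof
    fix t assume t: "t \<in> {0<..T}"
    then have "0 < s t \<and> 0 < e t \<and> 0 < i t \<and> 0 < j t" using pos by auto
    moreover have "0 < r t" using rpos[OF t] .
    moreover have "n t = s t + e t + i t + j t + r t" using nsum t by auto
    ultimately show "s t > 0 \<and> e t > 0 \<and> i t > 0 \<and> j t > 0 \<and> r t > 0 \<and> n t > 0" by simp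
  qed
  obtain B1 where B1: "\<forall>t\<in>{0..T}. \<bar>s t\<bar> \<le> B1" using cont_bound[OF cs] by blast
  obtain B2 where B2: "\<forall>t\<in>{0..T}. \<bar>e t\<bar> \<le> B2" using cont_bound[OF ce] by blast
  obtain B3 where B3: "\<forall>t\<in>{0..T}. \<bar>i t\<bar> \<le> B3" using cont_bound[OF ci] by blast
  obtain B4 where B4: "\<forall>t\<in>{0..T}. \<bar>j t\<bar> \<le> B4" using cont_bound[OF cj] by blast
  obtain B5 where B5: "\<forall>t\<in>{0..T}. \<bar>r t\<bar> \<le> B5" using cont_bound[OF cr] by blast
  obtain B6 where B6: "\<forall>t\<in>{0..T}. \<bar>n t\<bar> \<le> B6" using cont_bound[OF cn] by blast
  define B where "B = max B1 (max B2 (max B3 (max B4 (max B5 B6))))"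
  have Bs: "B1 \<le> B" "B2 \<le> B" "B3 \<le> B" "B4 \<le> B" "B5 \<le> B" "B6 \<le> B" by (simp_all add: B_def)
  have "\<forall>t\<in>{0<..T}. \<bar>s t\<bar> \<le> B \<and> \<bar>e t\<bar> \<le> B \<and> \<bar>i t\<bar> \<le> B \<and>
                              \<bar>j t\<bar> \<le> B \<and> \<bar>r t\<bar> \<le> B \<and> \<bar>n t\<bar> \<le> B"
  proof
    fix t assume "t \<in> {0<..T}"
    then have t: "t \<in> {0..T}" by auto
    show "\<bar>s t\<bar> \<le> B \<and> \<bar>e t\<bar> \<le> B \<and> \<bar>i t\<bar> \<le> B \<and>
                              \<bar>j t\<bar> \<le> B \<and> \<bar>r t\<bar> \<le> B \<and> \<bar>n t\<bar> \<le> B"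
      using B1[rule_format, OF t] B2[rule_format, OF t] B3[rule_format, OF t]
        B4[rule_format, OF t] B5[rule_format, OF t] B6[rule_format, OF t] Bs
      by linarith
  qed
  then show ?thesis using P by blast
qed

lemma clamp_lip: "\<bar>max 0 (min 1 a) - max 0 (min 1 b)\<bar> \<le> \<bar>a - (b::real)\<bar>"
  by (simp add: max_def min_def abs_if)

lemma clamp_bds: "0 \<le> max 0 (min 1 (a::real))" "max 0 (min 1 a) \<le> 1"
  by auto

lemma prod_lip:
  fixes a a' G G' K :: real
  assumes "0 \<le> a" "a \<le> 1" "0 \<le> a'" "a' \<le> 1" "0 \<le> G" "G \<le> K" "0 \<le> G'" "G' \<le> K"
  shows "\<bar>a * G - a' * G'\<bar> \<le> K * \<bar>a - a'\<bar> + \<bar>G - G'\<bar>"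
proof -
  have e: "a * G - a' * G' = (a - a') * G + a' * (G - G')" by (simp add: algebra_simps)
  have 1: "\<bar>(a - a') * G\<bar> \<le> K * \<bar>a - a'\<bar>"
  proof -
    have "\<bar>a - a'\<bar> * G \<le> \<bar>a - a'\<bar> * K" using assms by (intro mult_left_mono) auto
    then show ?thesis using assms by (simp add: abs_mult mult.commute)
  qed
  have "\<bar>a' * (G - G')\<bar> = a' * \<bar>G - G'\<bar>" using assms by (simp add: abs_mult)
  also have "\<dots> \<le> \<bar>G - G'\<bar>" using assms by (simp add: mult_left_le_one_le)
  finally have 2: "\<bar>a' * (G - G')\<bar> \<le> \<bar>G - G'\<bar>" .
  show ?thesis unfolding e using 1 2 abs_triangle_ineq[of "(a - a') * G" "a' * (G - G')"] by linarith
qed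

lemma exist:
  fixes \<beta>1 \<beta>2 \<gamma> \<rho>1 \<rho>2 \<sigma>1 \<sigma>2 q T s0 e0 i0 j0 r0 :: real
  assumes "\<beta>1 > 0" "\<beta>2 > 0" "\<gamma> > 0" "\<rho>1 > 0" "\<rho>2 > 0"
    and "\<sigma>1 > 0" "\<sigma>2 > 0" "\<sigma>1 + \<sigma>2 = 1"
    and "0 \<le> q" "q \<le> 1" "T > 0"
    and "s0 > 0" "e0 > 0" "i0 > 0" "j0 > 0" "r0 \<ge> 0"
    and "s0 + e0 + i0 + j0 + r0 = 1"
  shows "\<exists>s e i j r n. seijrn_solution \<beta>1 \<beta>2 \<gamma> \<rho>1 \<rho>2 \<sigma>1 \<sigma>2 q T s0 e0 i0 j0 r0 s e i j r n"
proof -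
  note A = assms
  define c where "c y = max 0 (min 1 y)" for y :: real
  have cb: "0 \<le> c y" "c y \<le> 1" for y by (auto simp: c_def)
  have cl: "\<bar>c a - c b\<bar> \<le> \<bar>a - b\<bar>" for a b unfolding c_def by (rule clamp_lip)
  have cid: "c y = y" if "0 \<le> y" "y \<le> 1" for y using that by (simp add: c_def)
  have cle: "c y \<le> y" if "0 \<le> y" for y using that by (simp add: c_def)
  define G where "G v = \<beta>1 * c (v $ 3) + \<beta>2 * c (v $ 4)" for v :: "real ^ 4"
  define F :: "real ^ 4 \<Rightarrow> real ^ 4" where "F v = (\<chi> k. if k = 1 then - c (v $ 1) * G v
                        else if k = 2 then c (v $ 1) * G v - \<gamma> * v $ 2
                        else if k = 3 then \<sigma>1 * \<gamma> * v $ 2 - \<rho>1 * v $ 3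
                        else \<sigma>2 * \<gamma> * v $ 2 - \<rho>2 * v $ 4)" for v
  have F1: "F v $ 1 = - c (v $ 1) * G v" for v by (simp add: F_def)
  have F2: "F v $ 2 = c (v $ 1) * G v - \<gamma> * v $ 2" for v by (simp add: F_def)
  have F3: "F v $ 3 = \<sigma>1 * \<gamma> * v $ 2 - \<rho>1 * v $ 3" for v by (simp add: F_def)
  have F4: "F v $ 4 = \<sigma>2 * \<gamma> * v $ 2 - \<rho>2 * v $ 4" for v by (simp add: F_def)
  have G0: "0 \<le> G v" for v using cb A(1,2) by (simp add: G_def)
  have GB: "G v \<le> \<beta>1 + \<beta>2" for v
  proof -
    have "\<beta>1 * c (v $ 3) \<le> \<beta>1" using cb A(1) by (simp add: mult_left_le)
    moreover have "\<beta>2 * c (v $ 4) \<le> \<beta>2" using cb A(2) by (simp add: mult_left_le)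
    ultimately show ?thesis by (simp add: G_def)
  qed
  have dk: "\<bar>v $ k - w $ k\<bar> \<le> norm (v - w)" for v w :: "real ^ 4" and k
    using component_le_norm_cart[of "v - w" k] by simp
  have GL: "\<bar>G v - G w\<bar> \<le> (\<beta>1 + \<beta>2) * norm (v - w)" for v w
  proof -
    have "\<bar>G v - G w\<bar> = \<bar>\<beta>1 * (c (v $ 3) - c (w $ 3)) + \<beta>2 * (c (v $ 4) - c (w $ 4))\<bar>"
      by (simp add: G_def algebra_simps)
    also have "\<dots> \<le> \<beta>1 * \<bar>c (v $ 3) - c (w $ 3)\<bar> + \<beta>2 * \<bar>c (v $ 4) - c (w $ 4)\<bar>"
      using A(1,2) abs_triangle_ineq[of "\<beta>1 * (c (v $ 3) - c (w $ 3))" "\<beta>2 * (c (v $ 4) - c (w $ 4))"]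
      by (simp add: abs_mult)
    also have "\<dots> \<le> \<beta>1 * norm (v - w) + \<beta>2 * norm (v - w)"
      using A(1,2) cl[of "v $ 3" "w $ 3"] cl[of "v $ 4" "w $ 4"] dk[of v 3 w] dk[of v 4 w]
      by (intro add_mono mult_left_mono) auto
    finally show ?thesis by (simp add: algebra_simps)
  qed
  have PL: "\<bar>c (v $ 1) * G v - c (w $ 1) * G w\<bar> \<le> 2 * (\<beta>1 + \<beta>2) * norm (v - w)" for v w
  proof -
    have "\<bar>c (v $ 1) * G v - c (w $ 1) * G w\<bar> \<le> (\<beta>1 + \<beta>2) * \<bar>c (v $ 1) - c (w $ 1)\<bar> + \<bar>G v - G w\<bar>"
      by (rule prod_lip) (use cb G0 GB in auto)
    moreover have "(\<beta>1 + \<beta>2) * \<bar>c (v $ 1) - c (w $ 1)\<bar> \<le> (\<beta>1 + \<beta>2) * norm (v - w)"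
      using A(1,2) cl[of "v $ 1" "w $ 1"] dk[of v 1 w] by (intro mult_left_mono) auto
    moreover have "2 * (\<beta>1 + \<beta>2) * norm (v - w) = (\<beta>1 + \<beta>2) * norm (v - w) + (\<beta>1 + \<beta>2) * norm (v - w)"
      by (simp add: algebra_simps)
    ultimately show ?thesis using GL[of v w] by linarith
  qed
  define L where "L = 4 * (\<beta>1 + \<beta>2) + 3 * \<gamma> + \<rho>1 + \<rho>2"
  have L0: "0 \<le> L" using A by (simp add: L_def)
  have Lip: "norm (F v - F w) \<le> L * norm (v - w)" for v w
  proof -
    define \<delta> where "\<delta> = norm (v - w)"
    have b1: "\<bar>F v $ 1 - F w $ 1\<bar> \<le> 2 * (\<beta>1 + \<beta>2) * \<delta>"
      using PL[of v w] unfolding F1 \<delta>_def by (simp add: abs_minus_commute)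
    have g2: "\<gamma> * \<bar>v $ 2 - w $ 2\<bar> \<le> \<gamma> * \<delta>" using dk[of v 2 w] A(3) unfolding \<delta>_def by (intro mult_left_mono) auto
    have b2: "\<bar>F v $ 2 - F w $ 2\<bar> \<le> 2 * (\<beta>1 + \<beta>2) * \<delta> + \<gamma> * \<delta>"
    proof -
      have "F v $ 2 - F w $ 2 = (c (v $ 1) * G v - c (w $ 1) * G w) - \<gamma> * (v $ 2 - w $ 2)"
        unfolding F2 by (simp add: algebra_simps)
      then have "\<bar>F v $ 2 - F w $ 2\<bar> \<le> \<bar>c (v $ 1) * G v - c (w $ 1) * G w\<bar> + \<bar>\<gamma> * (v $ 2 - w $ 2)\<bar>"
        by (simp only: abs_triangle_ineq4)
      moreover have "\<bar>\<gamma> * (v $ 2 - w $ 2)\<bar> = \<gamma> * \<bar>v $ 2 - w $ 2\<bar>" using A(3) by (simp add: abs_mult)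
      ultimately have "\<bar>F v $ 2 - F w $ 2\<bar> \<le> \<bar>c (v $ 1) * G v - c (w $ 1) * G w\<bar> + \<gamma> * \<bar>v $ 2 - w $ 2\<bar>"
        by linarith
      then show ?thesis using PL[of v w] g2 unfolding \<delta>_def by linarith
    qed
    have sg1: "\<sigma>1 * \<gamma> * \<bar>v $ 2 - w $ 2\<bar> \<le> \<gamma> * \<delta>"
    proof -
      have "\<sigma>1 * (\<gamma> * \<bar>v $ 2 - w $ 2\<bar>) \<le> 1 * (\<gamma> * \<bar>v $ 2 - w $ 2\<bar>)"
        using A(3,6,7,8) by (intro mult_right_mono) auto
      then show ?thesis using g2 by (simp add: mult.assoc)
    qed
    have sg2: "\<sigma>2 * \<gamma> * \<bar>v $ 2 - w $ 2\<bar> \<le> \<gamma> * \<delta>"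
    proof -
      have "\<sigma>2 * (\<gamma> * \<bar>v $ 2 - w $ 2\<bar>) \<le> 1 * (\<gamma> * \<bar>v $ 2 - w $ 2\<bar>)"
        using A(3,6,7,8) by (intro mult_right_mono) auto
      then show ?thesis using g2 by (simp add: mult.assoc)
    qed
    have r3: "\<rho>1 * \<bar>v $ 3 - w $ 3\<bar> \<le> \<rho>1 * \<delta>" using dk[of v 3 w] A(4) unfolding \<delta>_def by (intro mult_left_mono) auto
    have r4: "\<rho>2 * \<bar>v $ 4 - w $ 4\<bar> \<le> \<rho>2 * \<delta>" using dk[of v 4 w] A(5) unfolding \<delta>_def by (intro mult_left_mono) auto
    have b3: "\<bar>F v $ 3 - F w $ 3\<bar> \<le> \<gamma> * \<delta> + \<rho>1 * \<delta>"
    proof -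
      have "F v $ 3 - F w $ 3 = \<sigma>1 * \<gamma> * (v $ 2 - w $ 2) - \<rho>1 * (v $ 3 - w $ 3)"
        unfolding F3 by (simp add: algebra_simps)
      then have "\<bar>F v $ 3 - F w $ 3\<bar> \<le> \<bar>\<sigma>1 * \<gamma> * (v $ 2 - w $ 2)\<bar> + \<bar>\<rho>1 * (v $ 3 - w $ 3)\<bar>"
        by (simp only: abs_triangle_ineq4)
      moreover have "\<bar>\<sigma>1 * \<gamma> * (v $ 2 - w $ 2)\<bar> = \<sigma>1 * \<gamma> * \<bar>v $ 2 - w $ 2\<bar>" using A(3,4,6) by (simp add: abs_mult)
      moreover have "\<bar>\<rho>1 * (v $ 3 - w $ 3)\<bar> = \<rho>1 * \<bar>v $ 3 - w $ 3\<bar>" using A(3,4,6) by (simp add: abs_mult)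
      ultimately have "\<bar>F v $ 3 - F w $ 3\<bar> \<le> \<sigma>1 * \<gamma> * \<bar>v $ 2 - w $ 2\<bar> + \<rho>1 * \<bar>v $ 3 - w $ 3\<bar>"
        by linarith
      then show ?thesis using sg1 r3 by linarith
    qed
    have b4: "\<bar>F v $ 4 - F w $ 4\<bar> \<le> \<gamma> * \<delta> + \<rho>2 * \<delta>"
    proof -
      have "F v $ 4 - F w $ 4 = \<sigma>2 * \<gamma> * (v $ 2 - w $ 2) - \<rho>2 * (v $ 4 - w $ 4)"
        unfolding F4 by (simp add: algebra_simps)
      then have "\<bar>F v $ 4 - F w $ 4\<bar> \<le> \<bar>\<sigma>2 * \<gamma> * (v $ 2 - w $ 2)\<bar> + \<bar>\<rho>2 * (v $ 4 - w $ 4)\<bar>"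
        by (simp only: abs_triangle_ineq4)
      moreover have "\<bar>\<sigma>2 * \<gamma> * (v $ 2 - w $ 2)\<bar> = \<sigma>2 * \<gamma> * \<bar>v $ 2 - w $ 2\<bar>" using A(3,5,7) by (simp add: abs_mult)
      moreover have "\<bar>\<rho>2 * (v $ 4 - w $ 4)\<bar> = \<rho>2 * \<bar>v $ 4 - w $ 4\<bar>" using A(3,5,7) by (simp add: abs_mult)
      ultimately have "\<bar>F v $ 4 - F w $ 4\<bar> \<le> \<sigma>2 * \<gamma> * \<bar>v $ 2 - w $ 2\<bar> + \<rho>2 * \<bar>v $ 4 - w $ 4\<bar>"
        by linarith
      then show ?thesis using sg2 r4 by linarith
    qed
    have "norm (F v - F w) \<le> (\<Sum>k\<in>UNIV. \<bar>(F v - F w) $ k\<bar>)" by (rule norm_le_l1_cart)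
    also have "\<dots> = \<bar>F v $ 1 - F w $ 1\<bar> + \<bar>F v $ 2 - F w $ 2\<bar> + \<bar>F v $ 3 - F w $ 3\<bar> + \<bar>F v $ 4 - F w $ 4\<bar>"
      by (simp add: sum_4)
    also have "\<dots> \<le> L * \<delta>"
    proof -
      have "L * \<delta> = 2 * (\<beta>1 + \<beta>2) * \<delta> + (2 * (\<beta>1 + \<beta>2) * \<delta> + \<gamma> * \<delta>) + (\<gamma> * \<delta> + \<rho>1 * \<delta>) + (\<gamma> * \<delta> + \<rho>2 * \<delta>)"
        unfolding L_def by (simp add: algebra_simps)
      then show ?thesis using b1 b2 b3 b4 by linarith
    qed
    finally show ?thesis unfolding \<delta>_def .
  qed
  define x0 :: "real ^ 4" where "x0 = (\<chi> k. if k = 1 then s0 else if k = 2 then e0 else if k = 3 then i0 else j0)"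
  obtain x where x0: "x 0 = x0" and xd: "\<forall>t\<in>{0..T}. (x has_vector_derivative F (x t)) (at t within {0..T})"
    using picard[OF Lip L0 A(11), of x0] by blast
  define s where "s = (\<lambda>t. x t $ 1)"
  define e where "e = (\<lambda>t. x t $ 2)"
  define i where "i = (\<lambda>t. x t $ 3)"
  define j where "j = (\<lambda>t. x t $ 4)"
  have Gx: "G (x t) = \<beta>1 * c (i t) + \<beta>2 * c (j t)" for t by (simp add: G_def i_def j_def)
  have ds: "(s has_real_derivative - c (s t) * (\<beta>1 * c (i t) + \<beta>2 * c (j t))) (at t within {0..T})"
    if "t \<in> {0..T}" for t
    using vd[OF xd[rule_format, OF that], of 1] unfolding F1 Gx by (simp add: s_def)
  have de: "(e has_real_derivative c (s t) * (\<beta>1 * c (i t) + \<beta>2 * c (j t)) - \<gamma> * e t) (at t within {0..T})"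
    if "t \<in> {0..T}" for t
    using vd[OF xd[rule_format, OF that], of 2] unfolding F2 Gx by (simp add: s_def e_def)
  have di: "(i has_real_derivative \<sigma>1 * \<gamma> * e t - \<rho>1 * i t) (at t within {0..T})"
    if "t \<in> {0..T}" for t
    using vd[OF xd[rule_format, OF that], of 3] unfolding F3 by (simp add: i_def e_def)
  have dj: "(j has_real_derivative \<sigma>2 * \<gamma> * e t - \<rho>2 * j t) (at t within {0..T})"
    if "t \<in> {0..T}" for t
    using vd[OF xd[rule_format, OF that], of 4] unfolding F4 by (simp add: j_def e_def)
  have init: "s 0 = s0" "e 0 = e0" "i 0 = i0" "j 0 = j0"
    by (simp_all add: s_def e_def i_def j_def x0 x0_def)
  have cs: "continuous_on {0..T} s" by (rule DERIV_continuous_on[OF ds])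
  have ce: "continuous_on {0..T} e" by (rule DERIV_continuous_on[OF de])
  have ci: "continuous_on {0..T} i" by (rule DERIV_continuous_on[OF di])
  have cj: "continuous_on {0..T} j" by (rule DERIV_continuous_on[OF dj])
  have atI: "at t within {0..T} = at t" if "0 < t" "t < T" for t using that by (intro at_within_Icc_at)
  define M where "M = \<beta>1 + \<beta>2 + \<gamma> + \<rho>1 + \<rho>2"
  have pos: "\<forall>t\<in>{0..T}. 0 < s t \<and> 0 < e t \<and> 0 < i t \<and> 0 < j t"
  proof (rule pos4[OF A(11) cs ce ci cj, where M = M
      and s' = "\<lambda>t. - c (s t) * (\<beta>1 * c (i t) + \<beta>2 * c (j t))"
      and e' = "\<lambda>t. c (s t) * (\<beta>1 * c (i t) + \<beta>2 * c (j t)) - \<gamma> * e t"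
      and i' = "\<lambda>t. \<sigma>1 * \<gamma> * e t - \<rho>1 * i t"
      and j' = "\<lambda>t. \<sigma>2 * \<gamma> * e t - \<rho>2 * j t"])
    fix t :: real assume t: "0 < t" "t < T"
    then have tT: "t \<in> {0..T}" by simp
    show "(s has_real_derivative - c (s t) * (\<beta>1 * c (i t) + \<beta>2 * c (j t))) (at t) \<and>
      (e has_real_derivative c (s t) * (\<beta>1 * c (i t) + \<beta>2 * c (j t)) - \<gamma> * e t) (at t) \<and>
      (i has_real_derivative \<sigma>1 * \<gamma> * e t - \<rho>1 * i t) (at t) \<and>
      (j has_real_derivative \<sigma>2 * \<gamma> * e t - \<rho>2 * j t) (at t)"
      using ds[OF tT] de[OF tT] di[OF tT] dj[OF tT] unfolding atI[OF t] by blast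
  next
    show "0 < s 0" "0 < e 0" "0 < i 0" "0 < j 0" using init A(12-15) by simp_all
  next
    fix t :: real assume t: "0 < t" "t < T" and p: "0 < s t" "0 < e t" "0 < i t" "0 < j t"
    define g where "g = \<beta>1 * c (i t) + \<beta>2 * c (j t)"
    have g0: "0 \<le> g" using G0[of "x t"] unfolding Gx g_def .
    have gB: "g \<le> \<beta>1 + \<beta>2" using GB[of "x t"] unfolding Gx g_def .
    have "c (s t) * g \<le> s t * (\<beta>1 + \<beta>2)" using cle[of "s t"] p g0 gB cb
      by (intro mult_mono) auto
    also have "\<dots> \<le> s t * M" using p A unfolding M_def by (intro mult_left_mono) auto
    finally have c1: "- c (s t) * g \<ge> - M * s t" by (simp add: mult.commute)
    have cg0: "0 \<le> c (s t) * g" using cb g0 by simp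
    have "\<gamma> * e t \<le> M * e t" using p A unfolding M_def by (intro mult_right_mono) auto
    then have c2: "c (s t) * g - \<gamma> * e t \<ge> - M * e t" using cg0 by linarith
    have "\<rho>1 * i t \<le> M * i t" using p A unfolding M_def by (intro mult_right_mono) auto
    moreover have "0 \<le> \<sigma>1 * \<gamma> * e t" using p A by simp
    ultimately have c3: "\<sigma>1 * \<gamma> * e t - \<rho>1 * i t \<ge> - M * i t" by linarith
    have "\<rho>2 * j t \<le> M * j t" using p A unfolding M_def by (intro mult_right_mono) auto
    moreover have "0 \<le> \<sigma>2 * \<gamma> * e t" using p A by simp
    ultimately have c4: "\<sigma>2 * \<gamma> * e t - \<rho>2 * j t \<ge> - M * j t" by linarith
    show "- M * s t \<le> - c (s t) * (\<beta>1 * c (i t) + \<beta>2 * c (j t)) \<and>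
       - M * e t \<le> c (s t) * (\<beta>1 * c (i t) + \<beta>2 * c (j t)) - \<gamma> * e t \<and>
       - M * i t \<le> \<sigma>1 * \<gamma> * e t - \<rho>1 * i t \<and> - M * j t \<le> \<sigma>2 * \<gamma> * e t - \<rho>2 * j t"
      using c1 c2 c3 c4 unfolding g_def by blast
  qed
  define S where "S t = s t + e t + i t + j t" for t
  have dS: "(S has_real_derivative - \<rho>1 * i t - \<rho>2 * j t) (at t)" if t: "0 < t" "t < T" for t
  proof -
    have tT: "t \<in> {0..T}" using t by simp
    have D: "(S has_real_derivative (- c (s t) * (\<beta>1 * c (i t) + \<beta>2 * c (j t))) +
        (c (s t) * (\<beta>1 * c (i t) + \<beta>2 * c (j t)) - \<gamma> * e t) + (\<sigma>1 * \<gamma> * e t - \<rho>1 * i t) +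
        (\<sigma>2 * \<gamma> * e t - \<rho>2 * j t)) (at t)"
      unfolding S_def[abs_def]
      using ds[OF tT] de[OF tT] di[OF tT] dj[OF tT] unfolding atI[OF t]
      by (intro DERIV_add) blast+
    have eq: "(- c (s t) * (\<beta>1 * c (i t) + \<beta>2 * c (j t))) +
        (c (s t) * (\<beta>1 * c (i t) + \<beta>2 * c (j t)) - \<gamma> * e t) + (\<sigma>1 * \<gamma> * e t - \<rho>1 * i t) +
        (\<sigma>2 * \<gamma> * e t - \<rho>2 * j t) = - \<rho>1 * i t - \<rho>2 * j t"
    proof -
      have "\<sigma>1 * \<gamma> * e t + \<sigma>2 * \<gamma> * e t = (\<sigma>1 + \<sigma>2) * (\<gamma> * e t)" by (simp add: algebra_simps)
      then have h: "\<sigma>1 * \<gamma> * e t + \<sigma>2 * \<gamma> * e t = \<gamma> * e t" using A(8) by simp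
      show ?thesis using h by (simp add: algebra_simps)
    qed
    show ?thesis using D unfolding eq .
  qed
  have cS: "continuous_on {0..T} S" unfolding S_def[abs_def] by (intro continuous_intros cs ce ci cj)
  have ub: "S t \<le> 1" if t: "t \<in> {0..T}" for t
  proof (cases "t = 0")
    case True
    then show ?thesis using init A(16,17) by (simp add: S_def)
  next
    case False
    then have t0: "0 < t" using t by simp
    have "\<exists>l z. 0 < z \<and> z < t \<and> DERIV S z :> l \<and> S t - S 0 = (t - 0) * l"
    proof (rule MVT[OF t0])
      have "{0..t} \<subseteq> {0..T}" using t by auto
      then show "continuous_on {0..t} S" by (rule continuous_on_subset[OF cS])
      fix y assume y: "0 < y" "y < t"
      then have "y < T" using t by simp
      then show "S differentiable (at y)" using dS[OF y(1)] unfolding real_differentiable_def by blast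
    qed
    then obtain l z where z: "0 < z" "z < t" "DERIV S z :> l" "S t - S 0 = (t - 0) * l" by blast
    have zT: "z < T" using z t by simp
    have l: "l = - \<rho>1 * i z - \<rho>2 * j z" using DERIV_unique[OF z(3) dS[OF z(1) zT]] .
    have "z \<in> {0..T}" using z zT by simp
    then have "0 < i z" "0 < j z" using pos by blast+
    then have "0 < \<rho>1 * i z" "0 < \<rho>2 * j z" using A(4,5) by simp_all
    then have "l \<le> 0" unfolding l by linarith
    then have "t * l \<le> 0" using t0 by (simp add: mult_nonneg_nonpos)
    moreover have "S 0 \<le> 1" using init A(16,17) by (simp add: S_def)
    ultimately show ?thesis using z(4) by simp
  qed
  have sid: "c (s t) = s t" "c (i t) = i t" "c (j t) = j t" if t: "t \<in> {0..T}" for t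
    using pos[rule_format, OF t] ub[OF t] unfolding S_def by (auto intro!: cid)
  define r where "r t = r0 + integral {0..t} (\<lambda>u. \<rho>1 * i u + (1 - q) * \<rho>2 * j u)" for t
  define n where "n t = 1 - integral {0..t} (\<lambda>u. q * \<rho>2 * j u)" for t
  have cR: "continuous_on {0..T} (\<lambda>u. \<rho>1 * i u + (1 - q) * \<rho>2 * j u)" by (intro continuous_intros ci cj)
  have cN: "continuous_on {0..T} (\<lambda>u. q * \<rho>2 * j u)" by (intro continuous_intros cj)
  have dr: "(r has_real_derivative \<rho>1 * i t + (1 - q) * \<rho>2 * j t) (at t within {0..T})" if t: "t \<in> {0..T}" for t
    unfolding r_def[abs_def]
    using DERIV_add[OF DERIV_const[of r0] integral_has_real_derivative[OF cR t]] by simp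
  have dn: "(n has_real_derivative - q * \<rho>2 * j t) (at t within {0..T})" if t: "t \<in> {0..T}" for t
    unfolding n_def[abs_def]
    using DERIV_diff[OF DERIV_const[of 1] integral_has_real_derivative[OF cN t]] by simp
  have "seijrn_solution \<beta>1 \<beta>2 \<gamma> \<rho>1 \<rho>2 \<sigma>1 \<sigma>2 q T s0 e0 i0 j0 r0 s e i j r n"
    unfolding seijrn_solution_def
  proof (intro conjI ballI)
    show "s 0 = s0" "e 0 = e0" "i 0 = i0" "j 0 = j0" by (rule init)+
    show "r 0 = r0" "n 0 = 1" by (simp_all add: r_def n_def)
    fix t assume t: "t \<in> {0..T}"
    show "(s has_real_derivative - s t * (\<beta>1 * i t + \<beta>2 * j t)) (at t within {0..T})"
      using ds[OF t] unfolding sid[OF t] by simp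
    show "(e has_real_derivative s t * (\<beta>1 * i t + \<beta>2 * j t) - \<gamma> * e t) (at t within {0..T})"
      using de[OF t] unfolding sid[OF t] by simp
    show "(i has_real_derivative \<sigma>1 * \<gamma> * e t - \<rho>1 * i t) (at t within {0..T})" by (rule di[OF t])
    show "(j has_real_derivative \<sigma>2 * \<gamma> * e t - \<rho>2 * j t) (at t within {0..T})" by (rule dj[OF t])
    show "(r has_real_derivative \<rho>1 * i t + (1 - q) * \<rho>2 * j t) (at t within {0..T})" by (rule dr[OF t])
    show "(n has_real_derivative - q * \<rho>2 * j t) (at t within {0..T})" by (rule dn[OF t])
  qed
  then show ?thesis by blast
qed

theorem lemma1:
  fixes \<beta>1 \<beta>2 \<gamma> \<rho>1 \<rho>2 \<sigma>1 \<sigma>2 q T s0 e0 i0 j0 r0 :: real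
  assumes "\<beta>1 > 0" "\<beta>2 > 0" "\<gamma> > 0" "\<rho>1 > 0" "\<rho>2 > 0"
    and "\<sigma>1 > 0" "\<sigma>2 > 0" "\<sigma>1 + \<sigma>2 = 1"
    and "0 \<le> q" "q \<le> 1" "T > 0"
    and "s0 > 0" "e0 > 0" "i0 > 0" "j0 > 0" "r0 \<ge> 0"
    and "s0 + e0 + i0 + j0 + r0 = 1"
  shows "(\<exists>s e i j r n. seijrn_solution \<beta>1 \<beta>2 \<gamma> \<rho>1 \<rho>2 \<sigma>1 \<sigma>2 q T s0 e0 i0 j0 r0 s e i j r n)
    \<and> (\<forall>s e i j r n. seijrn_solution \<beta>1 \<beta>2 \<gamma> \<rho>1 \<rho>2 \<sigma>1 \<sigma>2 q T s0 e0 i0 j0 r0 s e i j r n \<longrightarrow>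
          (\<forall>t\<in>{0<..T}. s t > 0 \<and> e t > 0 \<and> i t > 0 \<and> j t > 0 \<and> r t > 0 \<and> n t > 0) \<and>
          (\<exists>B. \<forall>t\<in>{0<..T}. \<bar>s t\<bar> \<le> B \<and> \<bar>e t\<bar> \<le> B \<and> \<bar>i t\<bar> \<le> B \<and>
                              \<bar>j t\<bar> \<le> B \<and> \<bar>r t\<bar> \<le> B \<and> \<bar>n t\<bar> \<le> B))"
proof
  show "\<exists>s e i j r n. seijrn_solution \<beta>1 \<beta>2 \<gamma> \<rho>1 \<rho>2 \<sigma>1 \<sigma>2 q T s0 e0 i0 j0 r0 s e i j r n"
    by (rule exist[OF assms])
  show "\<forall>s e i j r n. seijrn_solution \<beta>1 \<beta>2 \<gamma> \<rho>1 \<rho>2 \<sigma>1 \<sigma>2 q T s0 e0 i0 j0 r0 s e i j r n \<longrightarrow>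
          (\<forall>t\<in>{0<..T}. s t > 0 \<and> e t > 0 \<and> i t > 0 \<and> j t > 0 \<and> r t > 0 \<and> n t > 0) \<and>
          (\<exists>B. \<forall>t\<in>{0<..T}. \<bar>s t\<bar> \<le> B \<and> \<bar>e t\<bar> \<le> B \<and> \<bar>i t\<bar> \<le> B \<and>
                              \<bar>j t\<bar> \<le> B \<and> \<bar>r t\<bar> \<le> B \<and> \<bar>n t\<bar> \<le> B)"
    using sol_props[OF assms] by blast
qed

end
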